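(* Let $n\ge2$ and $0\le\epsilon<1/2$, and let $U_0,\dots,U_T$ be a quantum query algorithm with $T$ queries to the comparison oracle which, for every permutation $\sigma$ of $\{0,\dots,n-1\}$, outputs $\sigma$ with probability at least $1-\epsilon$ (via a fixed measurement of the final state). With $s_t$ defined as below, $s_T\le 2\sqrt{\epsilon(1-\epsilon)}\,s_0$.
   Context: For a permutation $\sigma$ of $\{0,\dots,n-1\}$, the comparison matrix $M_\sigma\in\{0,1\}^{n\times n}$ has $(M_\sigma)_{i,j}=1$ if $\sigma(i)\le\sigma(j)$ and $0$ otherwise. $H$ is the Hilbert space spanned by orthonormal vectors $|i,j,b,c\rangle$, $0\le i,j\le n-1$, $b\in\{0,1\}$, $c\in\{0,1\}^w$ for some fixed $w\ge0$, and $O_\sigma|i,j,b,c\rangle=|i,j,b\oplus(M_\sigma)_{i,j},c\rangle$. For $0\le t\le T$, $|\psi_\sigma^t\rangle=U_tO_\sigma U_{t-1}O_\sigma\cdots U_1O_\sigma U_0|\vec0\rangle$. For $0\le k\le n-2$, $1\le d\le n-k-1$, $\sigma^{(k,d)}=(k+d,k+d-1,\dots,k)\circ\sigma$ (the cycle sends $k+d\mapsto k+d-1\mapsto\cdots\mapsto k\mapsto k+d$); $w(\sigma,\tau)=1/d$ if $\tau=\sigma^{(k,d)}$ for some such $k,d$, and $0$ otherwise. Finally $s_t=\sum_{\sigma,\tau}w(\sigma,\tau)\,|\langle\psi^t_\sigma|\psi^t_\tau\rangle|$. *)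

theory Defs
  imports "Jordan_Normal_Form.Schur_Decomposition" "HOL-Combinatorics.Permutations"
begin

(* Basis |i,j,b,c> with 0<=i,j<n, b in {0,1}, c in {0,1}^w (encoded as c < 2^w),
   indexed as ((i*n+j)*2+b)*2^w + c.  H = C^(dimH n w). *)
definition dimH :: "nat \<Rightarrow> nat \<Rightarrow> nat" where
  "dimH n w = n * n * 2 * 2 ^ w"

definition bidx :: "nat \<Rightarrow> nat \<Rightarrow> nat \<Rightarrow> nat \<Rightarrow> nat \<Rightarrow> nat \<Rightarrow> nat" where
  "bidx n w i j b c = ((i * n + j) * 2 + b) * 2 ^ w + c"

definition cmpM :: "(nat \<Rightarrow> nat) \<Rightarrow> nat \<Rightarrow> nat \<Rightarrow> nat" where
  "cmpM \<sigma> i j = (if \<sigma> i \<le> \<sigma> j then 1 else 0)"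

(* O_sigma |i,j,b,c> = |i,j,b xor M_{ij},c> *)
definition Omat :: "nat \<Rightarrow> nat \<Rightarrow> (nat \<Rightarrow> nat) \<Rightarrow> complex mat" where
  "Omat n w \<sigma> = mat (dimH n w) (dimH n w) (\<lambda>(r, s).
     if (\<exists>i<n. \<exists>j<n. \<exists>b<2. \<exists>c<2 ^ w.
            s = bidx n w i j b c \<and> r = bidx n w i j ((b + cmpM \<sigma> i j) mod 2) c)
     then 1 else 0)"

definition unitary_mat :: "nat \<Rightarrow> complex mat \<Rightarrow> bool" where
  "unitary_mat N U \<longleftrightarrow> U \<in> carrier_mat N N \<and> mat_adjoint U * U = 1\<^sub>m N"

definition psd_mat :: "nat \<Rightarrow> complex mat \<Rightarrow> bool" where
  "psd_mat N E \<longleftrightarrow> E \<in> carrier_mat N N \<and> mat_adjoint E = E \<and>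
     (\<forall>v\<in>carrier_vec N. 0 \<le> Re ((E *\<^sub>v v) \<bullet>c v))"

fun psi :: "nat \<Rightarrow> nat \<Rightarrow> (nat \<Rightarrow> complex mat) \<Rightarrow> (nat \<Rightarrow> nat) \<Rightarrow> nat \<Rightarrow> complex vec" where
  "psi n w U \<sigma> 0 = U 0 *\<^sub>v unit_vec (dimH n w) (bidx n w 0 0 0 0)"
| "psi n w U \<sigma> (Suc t) = U (Suc t) *\<^sub>v (Omat n w \<sigma> *\<^sub>v psi n w U \<sigma> t)"

definition perms :: "nat \<Rightarrow> (nat \<Rightarrow> nat) set" where
  "perms n = {\<sigma>. \<sigma> permutes {..<n}}"

definition cyc :: "nat \<Rightarrow> nat \<Rightarrow> nat \<Rightarrow> nat" where
  "cyc k d x = (if x = k then k + d else if k < x \<and> x \<le> k + d then x - 1 else x)"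

definition valid_kd :: "nat \<Rightarrow> nat \<Rightarrow> nat \<Rightarrow> bool" where
  "valid_kd n k d \<longleftrightarrow> k \<le> n - 2 \<and> 1 \<le> d \<and> d \<le> n - k - 1"

definition wt :: "nat \<Rightarrow> (nat \<Rightarrow> nat) \<Rightarrow> (nat \<Rightarrow> nat) \<Rightarrow> real" where
  "wt n \<sigma> \<tau> = (if \<exists>k d. valid_kd n k d \<and> \<tau> = cyc k d \<circ> \<sigma>
      then 1 / real (THE d. \<exists>k. valid_kd n k d \<and> \<tau> = cyc k d \<circ> \<sigma>) else 0)"

definition s_prog :: "nat \<Rightarrow> nat \<Rightarrow> (nat \<Rightarrow> complex mat) \<Rightarrow> nat \<Rightarrow> real" where
  "s_prog n w U t = (\<Sum>\<sigma>\<in>perms n. \<Sum>\<tau>\<in>perms n.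
      wt n \<sigma> \<tau> * cmod (psi n w U \<sigma> t \<bullet>c psi n w U \<tau> t))"

end

theory Submission
  imports Defs
begin

definition Qf :: "nat \<Rightarrow> (nat \<Rightarrow> nat \<Rightarrow> complex) \<Rightarrow> (nat \<Rightarrow> complex) \<Rightarrow> (nat \<Rightarrow> complex) \<Rightarrow> complex" where
  "Qf N A x y = (\<Sum>i<N. \<Sum>j<N. A i j * x j * cnj (y i))"

lemma conj_complex: "conjugate (z::complex) = cnj z"
  by (simp add: conjugate_complex_def)

lemma Qf_conv:
  assumes "M \<in> carrier_mat N N" "x \<in> carrier_vec N" "y \<in> carrier_vec N"
  shows "(M *\<^sub>v x) \<bullet>c y = Qf N (\<lambda>i j. M $$ (i,j)) (\<lambda>j. x $ j) (\<lambda>i. y $ i)"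
  using assms unfolding Qf_def scalar_prod_def
  by (auto simp: conj_complex row_def scalar_prod_def lessThan_atLeast0 sum_distrib_right sum_distrib_left mult.commute mult.left_commute intro!: sum.cong)

lemma Qf_cong:
  assumes "\<And>i j. i < N \<Longrightarrow> j < N \<Longrightarrow> A i j = B i j" "\<And>j. j < N \<Longrightarrow> x j = x' j" "\<And>j. j < N \<Longrightarrow> y j = y' j"
  shows "Qf N A x y = Qf N B x' y'"
  using assms unfolding Qf_def by (auto intro!: sum.cong)

lemma Qf_sumA: "Qf N (\<lambda>i j. \<Sum>r\<in>S. F r i j) x y = (\<Sum>r\<in>S. Qf N (F r) x y)"
proof -
  have "Qf N (\<lambda>i j. \<Sum>r\<in>S. F r i j) x y = (\<Sum>i<N. \<Sum>j<N. \<Sum>r\<in>S. F r i j * x j * cnj (y i))"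
    unfolding Qf_def by (simp add: sum_distrib_right)
  also have "\<dots> = (\<Sum>i<N. \<Sum>r\<in>S. \<Sum>j<N. F r i j * x j * cnj (y i))"
    by (rule sum.cong[OF refl], rule sum.swap)
  also have "\<dots> = (\<Sum>r\<in>S. \<Sum>i<N. \<Sum>j<N. F r i j * x j * cnj (y i))"
    by (rule sum.swap)
  finally show ?thesis unfolding Qf_def .
qed

lemma Qf_addA: "Qf N (\<lambda>i j. A i j + B i j) x y = Qf N A x y + Qf N B x y"
  unfolding Qf_def by (simp add: distrib_right sum.distrib)

lemma Qf_add1: "Qf N A (\<lambda>j. x j + z j) y = Qf N A x y + Qf N A z y"
  unfolding Qf_def by (simp add: distrib_right distrib_left sum.distrib)

lemma Qf_add2: "Qf N A x (\<lambda>j. y j + z j) = Qf N A x y + Qf N A x z"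
  unfolding Qf_def by (simp add: distrib_right distrib_left sum.distrib)

lemma Qf_smult1: "Qf N A (\<lambda>j. l * x j) y = l * Qf N A x y"
  unfolding Qf_def by (simp add: sum_distrib_left mult_ac)

lemma Qf_smult2: "Qf N A x (\<lambda>j. l * y j) = cnj l * Qf N A x y"
  unfolding Qf_def by (simp add: sum_distrib_left mult_ac)

lemma Qf_herm:
  assumes "\<And>i j. i < N \<Longrightarrow> j < N \<Longrightarrow> A i j = cnj (A j i)"
  shows "Qf N A y x = cnj (Qf N A x y)"
proof -
  have h: "\<And>i j. i < N \<Longrightarrow> j < N \<Longrightarrow> cnj (A i j) = A j i"
    using assms by (metis complex_cnj_cnj)
  have "cnj (Qf N A x y) = (\<Sum>i<N. \<Sum>j<N. cnj (A i j) * cnj (x j) * y i)"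
    unfolding Qf_def by simp
  also have "\<dots> = (\<Sum>i<N. \<Sum>j<N. A j i * y i * cnj (x j))"
    using h by (auto simp: mult_ac intro!: sum.cong)
  also have "\<dots> = Qf N A y x" unfolding Qf_def by (rule sum.swap)
  finally show ?thesis by simp
qed

lemma Qf_expand:
  "Qf N A (\<lambda>j. x j + l * y j) (\<lambda>j. x j + l * y j) =
    Qf N A x x + cnj l * Qf N A x y + l * Qf N A y x + l * cnj l * Qf N A y y"
  by (simp add: Qf_add1 Qf_add2 Qf_smult1 Qf_smult2 algebra_simps)

lemma real_quad:
  fixes a b k :: real
  assumes "\<And>t. 0 \<le> a - 2 * t * k + t^2 * k * b" "0 \<le> k" "0 \<le> a" "0 \<le> b"
  shows "k \<le> a * b"
proof (cases "k = 0")
  case True then show ?thesis using assms by simp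
next
  case False
  then have kp: "k > 0" using assms by simp
  show ?thesis
  proof (cases "b = 0")
    case True
    have "0 \<le> a - 2 * ((a+1)/(2*k)) * k" using assms(1)[of "(a+1)/(2*k)"] True by simp
    also have "\<dots> = -1" using kp by (simp add: field_simps)
    finally show ?thesis by simp
  next
    case False
    then have bp: "b > 0" using assms by simp
    have "0 \<le> a - 2 * (1/b) * k + (1/b)^2 * k * b" by (rule assms(1))
    also have "\<dots> = (a * b - k) / b" using bp by (simp add: field_simps power2_eq_square)
    finally have "0 \<le> (a * b - k) / b" .
    then show ?thesis using bp by (simp add: divide_nonneg_pos zero_le_divide_iff)
  qed
qed

lemma Qf_CS:
  assumes psd: "\<And>z. 0 \<le> Re (Qf N A z z)"
    and herm: "\<And>x y. Qf N A y x = cnj (Qf N A x y)"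
  shows "(cmod (Qf N A x y))^2 \<le> Re (Qf N A x x) * Re (Qf N A y y)"
proof -
  define c where "c = Qf N A x y"
  define a where "a = Re (Qf N A x x)"
  define b where "b = Re (Qf N A y y)"
  have imy: "Im (Qf N A y y) = 0" using herm[of y y] by (metis cnj.sel(2) neg_equal_zero)
  have key: "0 \<le> a - 2 * t * (cmod c)^2 + t^2 * (cmod c)^2 * b" for t :: real
  proof -
    define l where "l = - (complex_of_real t * c)"
    have cc: "c * cnj c = complex_of_real ((cmod c)^2)" by (rule complex_norm_square[symmetric])
    have "0 \<le> Re (Qf N A (\<lambda>j. x j + l * y j) (\<lambda>j. x j + l * y j))" by (rule psd)
    also have "\<dots> = Re (Qf N A x x + cnj l * c + l * cnj c + l * cnj l * Qf N A y y)"
      unfolding Qf_expand c_def using herm[of x y] by simp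
    also have "cnj l * c = - complex_of_real (t * (cmod c)^2)"
      unfolding l_def using cc by (simp add: mult_ac)
    also have "l * cnj c = - complex_of_real (t * (cmod c)^2)"
      unfolding l_def using cc by (simp add: mult_ac)
    also have "l * cnj l = complex_of_real (t^2 * (cmod c)^2)"
      unfolding l_def using cc by (simp add: mult_ac power2_eq_square)
    also have "Re (Qf N A x x + - complex_of_real (t * (cmod c)^2) + - complex_of_real (t * (cmod c)^2)
        + complex_of_real (t^2 * (cmod c)^2) * Qf N A y y) = a - 2 * t * (cmod c)^2 + t^2 * (cmod c)^2 * b"
      unfolding a_def b_def using imy by simp
    finally show ?thesis .
  qed
  have "(cmod c)^2 \<le> a * b"
    by (rule real_quad[OF key]) (auto simp: a_def b_def psd)
  then show ?thesis unfolding a_def b_def c_def .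
qed

lemma unitary_entries:
  assumes "unitary_mat N U" "k < N" "j < N"
  shows "(\<Sum>i<N. cnj (U $$ (i,k)) * U $$ (i,j)) = (if k = j then 1 else 0)"
proof -
  have U: "U \<in> carrier_mat N N" and e: "mat_adjoint U * U = 1\<^sub>m N"
    using assms unfolding unitary_mat_def by auto
  have "(mat_adjoint U * U) $$ (k,j) = (\<Sum>i<N. cnj (U $$ (i,k)) * U $$ (i,j))"
    using U assms unfolding mat_adjoint_def
    by (simp add: scalar_prod_def lessThan_atLeast0 conj_complex mat_of_rows_index col_def)
  then show ?thesis using e assms by simp
qed

lemma unitary_norm:
  assumes "unitary_mat N U" "x \<in> carrier_vec N"
  shows "(U *\<^sub>v x) \<bullet>c (U *\<^sub>v x) = x \<bullet>c x"
proof -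
  have U: "U \<in> carrier_mat N N" using assms unfolding unitary_mat_def by auto
  have "(U *\<^sub>v x) \<bullet>c (U *\<^sub>v x) = (\<Sum>i<N. \<Sum>k<N. \<Sum>j<N. x $ j * (cnj (x $ k) * (U $$ (i,j) * cnj (U $$ (i,k)))))"
    using U assms(2)
    by (simp add: scalar_prod_def lessThan_atLeast0 conj_complex row_def sum_distrib_left sum_distrib_right mult_ac)
  also have "\<dots> = (\<Sum>k<N. \<Sum>i<N. \<Sum>j<N. x $ j * (cnj (x $ k) * (U $$ (i,j) * cnj (U $$ (i,k)))))"
    by (rule sum.swap)
  also have "\<dots> = (\<Sum>k<N. \<Sum>j<N. \<Sum>i<N. x $ j * (cnj (x $ k) * (U $$ (i,j) * cnj (U $$ (i,k)))))"
    by (rule sum.cong[OF refl], rule sum.swap)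
  also have "\<dots> = (\<Sum>k<N. \<Sum>j<N. x $ j * cnj (x $ k) * (\<Sum>i<N. cnj (U $$ (i,k)) * U $$ (i,j)))"
    by (simp add: sum_distrib_left mult_ac)
  also have "\<dots> = (\<Sum>k<N. \<Sum>j<N. x $ j * cnj (x $ k) * (if k = j then 1 else 0))"
    using unitary_entries[OF assms(1)] by simp
  also have "\<dots> = (\<Sum>k<N. x $ k * cnj (x $ k))"
    by (simp add: if_distrib cong: if_cong)
  also have "\<dots> = x \<bullet>c x"
    using assms(2) by (simp add: scalar_prod_def lessThan_atLeast0 conj_complex)
  finally show ?thesis .
qed

lemma real_final:
  fixes p q \<epsilon> :: real
  assumes "1 - \<epsilon> \<le> p" "p \<le> 1" "0 \<le> q" "q \<le> \<epsilon>" "0 \<le> \<epsilon>" "\<epsilon> < 1/2"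
  shows "sqrt (p * q) + sqrt ((1 - p) * (1 - q)) \<le> 2 * sqrt (\<epsilon> * (1 - \<epsilon>))"
proof -
  define x where "x = sqrt p"
  define y where "y = sqrt (1 - p)"
  define z where "z = sqrt q"
  define t where "t = sqrt (1 - q)"
  define e where "e = sqrt \<epsilon>"
  define f where "f = sqrt (1 - \<epsilon>)"
  have bnds: "0 \<le> p" "0 \<le> 1 - p" "0 \<le> q" "0 \<le> 1 - q" "0 \<le> \<epsilon>" "0 \<le> 1 - \<epsilon>"
    using assms by linarith+
  have x2: "x^2 = p" unfolding x_def using bnds(1) by (rule real_sqrt_pow2)
  have y2: "y^2 = 1 - p" unfolding y_def using bnds(2) by (rule real_sqrt_pow2)
  have z2: "z^2 = q" unfolding z_def using bnds(3) by (rule real_sqrt_pow2)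
  have t2: "t^2 = 1 - q" unfolding t_def using bnds(4) by (rule real_sqrt_pow2)
  have e2: "e^2 = \<epsilon>" unfolding e_def using bnds(5) by (rule real_sqrt_pow2)
  have f2: "f^2 = 1 - \<epsilon>" unfolding f_def using bnds(6) by (rule real_sqrt_pow2)
  have nn: "0 \<le> x" "0 \<le> y" "0 \<le> z" "0 \<le> t" "0 \<le> e" "0 \<le> f"
    unfolding x_def y_def z_def t_def e_def f_def using bnds by simp_all
  have xf1: "f \<le> x" unfolding f_def x_def by (rule real_sqrt_le_mono) (use assms in linarith)
  have xf2: "y \<le> e" unfolding y_def e_def by (rule real_sqrt_le_mono) (use assms in linarith)
  have xf3: "z \<le> e" unfolding z_def e_def by (rule real_sqrt_le_mono) (use assms in linarith)
  have xf4: "f \<le> t" unfolding f_def t_def by (rule real_sqrt_le_mono) (use assms in linarith)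
  have m1: "f * f \<le> x * t" using xf1 xf4 nn by (intro mult_mono) auto
  have m2: "y * z \<le> e * e" using xf2 xf3 nn by (intro mult_mono) auto
  have ff: "f * f = 1 - \<epsilon>" using f2 by (simp add: power2_eq_square)
  have ee: "e * e = \<epsilon>" using e2 by (simp add: power2_eq_square)
  have d: "1 - 2 * \<epsilon> \<le> x * t - y * z" using m1 m2 ff ee by linarith
  have d0: "0 \<le> 1 - 2 * \<epsilon>" using assms by linarith
  have dd: "(1 - 2 * \<epsilon>)^2 \<le> (x * t - y * z)^2" using d d0 by (rule power_mono)
  have id: "(x*z + y*t)^2 + (x*t - y*z)^2 = (x^2+y^2)*(z^2+t^2)"
    by (simp add: power2_eq_square algebra_simps)
  have one: "(x^2+y^2)*(z^2+t^2) = 1" using x2 y2 z2 t2 by simp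
  have "(x*z + y*t)^2 \<le> 1 - (1 - 2 * \<epsilon>)^2" using id one dd by linarith
  also have "\<dots> = 4 * \<epsilon> * (1 - \<epsilon>)" by (simp add: power2_eq_square algebra_simps)
  also have "\<dots> = (2 * (e * f))^2" by (simp add: power_mult_distrib e2 f2)
  finally have sq: "(x*z + y*t)^2 \<le> (2 * (e * f))^2" .
  have fin: "x*z + y*t \<le> 2 * (e * f)"
    by (rule power2_le_imp_le[OF sq]) (use nn in simp)
  have s1: "sqrt (p * q) = x * z" unfolding x_def z_def by (rule real_sqrt_mult)
  have s2: "sqrt ((1 - p) * (1 - q)) = y * t" unfolding y_def t_def by (rule real_sqrt_mult)
  have s3: "sqrt (\<epsilon> * (1 - \<epsilon>)) = e * f" unfolding e_def f_def by (rule real_sqrt_mult)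
  show ?thesis unfolding s1 s2 s3 using fin by simp
qed

lemma adj_index:
  assumes "M \<in> carrier_mat N N" "i < N" "j < N"
  shows "mat_adjoint M $$ (i,j) = cnj (M $$ (j,i))"
  using assms by (simp add: mat_adjoint_def mat_of_rows_index conj_complex col_def)

lemma psd_Q:
  assumes "psd_mat N M"
  shows "0 \<le> Re (Qf N (\<lambda>i j. M $$ (i,j)) z z)"
proof -
  have M: "M \<in> carrier_mat N N" using assms unfolding psd_mat_def by auto
  have v: "vec N z \<in> carrier_vec N" by simp
  have "0 \<le> Re ((M *\<^sub>v vec N z) \<bullet>c vec N z)" using assms v unfolding psd_mat_def by blast
  also have "(M *\<^sub>v vec N z) \<bullet>c vec N z = Qf N (\<lambda>i j. M $$ (i,j)) z z"
    unfolding Qf_conv[OF M v v] by (rule Qf_cong) auto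
  finally show ?thesis .
qed

lemma psd_herm:
  assumes "psd_mat N M" "i < N" "j < N"
  shows "M $$ (i,j) = cnj (M $$ (j,i))"
proof -
  have M: "M \<in> carrier_mat N N" and a: "mat_adjoint M = M" using assms unfolding psd_mat_def by auto
  have "M $$ (i,j) = mat_adjoint M $$ (i,j)" using a by simp
  also have "\<dots> = cnj (M $$ (j,i))" using adj_index[OF M assms(2,3)] .
  finally show ?thesis .
qed

lemma pair_bound:
  fixes P :: "'a set" and E :: "'a \<Rightarrow> complex mat"
  assumes fin: "finite P" and s: "\<sigma> \<in> P" and t: "\<tau> \<in> P" and st: "\<sigma> \<noteq> \<tau>"
    and psd: "\<forall>\<rho>\<in>P. psd_mat N (E \<rho>)"
    and sum1: "\<forall>r<N. \<forall>c<N. (\<Sum>\<rho>\<in>P. E \<rho> $$ (r,c)) = 1\<^sub>m N $$ (r,c)"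
    and u: "u \<in> carrier_vec N" and v: "v \<in> carrier_vec N" and uu: "u \<bullet>c u = 1" and vv: "v \<bullet>c v = 1"
    and pu: "Re ((E \<sigma> *\<^sub>v u) \<bullet>c u) \<ge> 1 - \<epsilon>" and pv: "Re ((E \<tau> *\<^sub>v v) \<bullet>c v) \<ge> 1 - \<epsilon>"
    and e0: "0 \<le> \<epsilon>" and e1: "\<epsilon> < 1/2"
  shows "cmod (u \<bullet>c v) \<le> 2 * sqrt (\<epsilon> * (1 - \<epsilon>))"
proof -
  define A where "A = (\<lambda>i j. E \<sigma> $$ (i,j))"
  define B where "B = (\<lambda>i j. \<Sum>\<rho>\<in>P-{\<sigma>}. E \<rho> $$ (i,j))"
  define xu where "xu = (\<lambda>j. u $ j)"
  define xv where "xv = (\<lambda>j. v $ j)"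
  have Ecar: "\<And>\<rho>. \<rho> \<in> P \<Longrightarrow> E \<rho> \<in> carrier_mat N N" using psd unfolding psd_mat_def by auto
  have QE: "\<And>\<rho> x y. \<rho> \<in> P \<Longrightarrow> x \<in> carrier_vec N \<Longrightarrow> y \<in> carrier_vec N \<Longrightarrow>
      (E \<rho> *\<^sub>v x) \<bullet>c y = Qf N (\<lambda>i j. E \<rho> $$ (i,j)) (\<lambda>j. x $ j) (\<lambda>i. y $ i)"
    using Qf_conv Ecar by blast
  have AB: "A i j + B i j = 1\<^sub>m N $$ (i,j)" if "i < N" "j < N" for i j
    using sum1 that sum.remove[OF fin s, of "\<lambda>\<rho>. E \<rho> $$ (i,j)"] unfolding A_def B_def by auto
  have split: "x \<bullet>c y = Qf N A (\<lambda>j. x $ j) (\<lambda>i. y $ i) + Qf N B (\<lambda>j. x $ j) (\<lambda>i. y $ i)"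
    if x: "x \<in> carrier_vec N" and y: "y \<in> carrier_vec N" for x y
  proof -
    have "x \<bullet>c y = (1\<^sub>m N *\<^sub>v x) \<bullet>c y" using x by simp
    also have "\<dots> = Qf N (\<lambda>i j. 1\<^sub>m N $$ (i,j)) (\<lambda>j. x $ j) (\<lambda>i. y $ i)"
      by (rule Qf_conv[OF one_carrier_mat x y])
    also have "\<dots> = Qf N (\<lambda>i j. A i j + B i j) (\<lambda>j. x $ j) (\<lambda>i. y $ i)"
      by (rule Qf_cong) (auto simp: AB)
    finally show ?thesis by (simp add: Qf_addA)
  qed
  have psdA: "\<And>z. 0 \<le> Re (Qf N A z z)" unfolding A_def using psd_Q psd s by blast
  have hermA: "\<And>x y. Qf N A y x = cnj (Qf N A x y)" unfolding A_def
    by (rule Qf_herm) (use psd_herm psd s in blast)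
  have QB: "\<And>x y. Qf N B x y = (\<Sum>\<rho>\<in>P-{\<sigma>}. Qf N (\<lambda>i j. E \<rho> $$ (i,j)) x y)"
    unfolding B_def by (rule Qf_sumA)
  have psdB: "\<And>z. 0 \<le> Re (Qf N B z z)"
    unfolding QB Re_sum using psd_Q psd by (auto intro!: sum_nonneg)
  have Bge: "Re (Qf N (\<lambda>i j. E \<tau> $$ (i,j)) z z) \<le> Re (Qf N B z z)" for z
    unfolding QB Re_sum using psd_Q psd t st fin
    by (intro member_le_sum) auto
  have hermB: "\<And>x y. Qf N B y x = cnj (Qf N B x y)"
    unfolding QB cnj_sum
  proof (rule sum.cong[OF refl])
    fix x y \<rho> assume "\<rho> \<in> P - {\<sigma>}"
    then show "Qf N (\<lambda>i j. E \<rho> $$ (i,j)) y x = cnj (Qf N (\<lambda>i j. E \<rho> $$ (i,j)) x y)"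
      by (intro Qf_herm) (use psd_herm psd in blast)
  qed
  define p where "p = Re (Qf N A xu xu)"
  define q where "q = Re (Qf N A xv xv)"
  have p1: "1 - \<epsilon> \<le> p" using pu QE[OF s u u] unfolding p_def A_def xu_def by simp
  have pB: "p + Re (Qf N B xu xu) = 1" using arg_cong[OF split[OF u u], of Re] uu
    unfolding p_def xu_def by simp
  have qB: "q + Re (Qf N B xv xv) = 1" using arg_cong[OF split[OF v v], of Re] vv
    unfolding q_def xv_def by simp
  have qB2: "1 - \<epsilon> \<le> Re (Qf N B xv xv)" using pv QE[OF t v v] Bge[of xv] unfolding xv_def by simp
  have CA: "(cmod (Qf N A xu xv))^2 \<le> p * q" unfolding p_def q_def by (rule Qf_CS[OF psdA hermA])
  have CB: "(cmod (Qf N B xu xv))^2 \<le> (1 - p) * (1 - q)"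
  proof -
    have b1: "Re (Qf N B xu xu) = 1 - p" using pB by linarith
    have b2: "Re (Qf N B xv xv) = 1 - q" using qB by linarith
    show ?thesis using Qf_CS[OF psdB hermB, of xu xv] unfolding b1 b2 .
  qed
  have "cmod (u \<bullet>c v) \<le> cmod (Qf N A xu xv) + cmod (Qf N B xu xv)"
    unfolding split[OF u v] xu_def xv_def by (rule norm_triangle_ineq)
  also have "\<dots> \<le> sqrt (p * q) + sqrt ((1 - p) * (1 - q))"
    using CA CB by (intro add_mono real_le_rsqrt)
  also have "\<dots> \<le> 2 * sqrt (\<epsilon> * (1 - \<epsilon>))"
    apply (rule real_final)
    using p1 pB psdB[of xu] psdA[of xv] qB qB2 e0 e1 unfolding q_def by auto
  finally show ?thesis .
qed

definition piO :: "nat \<Rightarrow> nat \<Rightarrow> (nat \<Rightarrow> nat) \<Rightarrow> nat \<Rightarrow> nat" where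
  "piO n w \<sigma> r = bidx n w (r div 2^w div 2 div n) (r div 2^w div 2 mod n)
     ((r div 2^w mod 2 + cmpM \<sigma> (r div 2^w div 2 div n) (r div 2^w div 2 mod n)) mod 2) (r mod 2^w)"

lemma lt_mult_add:
  fixes X Y K c :: nat
  assumes "X < Y" "c < K"
  shows "X * K + c < Y * K"
proof -
  have "X * K + c < X * K + K" using assms by simp
  also have "\<dots> = (X + 1) * K" by simp
  also have "\<dots> \<le> Y * K" using assms by (intro mult_right_mono) auto
  finally show ?thesis .
qed

lemma mod2_aux: "b < 2 \<Longrightarrow> ((X::nat) * 2 + b) mod 2 = b"
  by simp

lemma bidx_props:
  assumes "i < n" "j < n" "b < 2" "c < 2^w"
  shows "bidx n w i j b c mod 2^w = c" "bidx n w i j b c div 2^w mod 2 = b"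
    "bidx n w i j b c div 2^w div 2 div n = i" "bidx n w i j b c div 2^w div 2 mod n = j"
    "bidx n w i j b c < dimH n w"
proof -
  have d1: "bidx n w i j b c div 2^w = (i * n + j) * 2 + b" unfolding bidx_def using assms by simp
  show "bidx n w i j b c mod 2^w = c" unfolding bidx_def using assms by simp
  show "bidx n w i j b c div 2^w mod 2 = b" unfolding d1 using assms(3) by (rule mod2_aux)
  have d2: "bidx n w i j b c div 2^w div 2 = i * n + j" unfolding d1 using assms by simp
  show "bidx n w i j b c div 2^w div 2 div n = i" unfolding d2 using assms by simp
  show "bidx n w i j b c div 2^w div 2 mod n = j" unfolding d2 using assms by simp
  have "i * n + j < n * n"
  proof -
    have "i * n + j < i * n + n" using assms by simp
    also have "\<dots> = (i + 1) * n" by simp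
    also have "\<dots> \<le> n * n" using assms by (intro mult_right_mono) auto
    finally show ?thesis .
  qed
  then have "(i * n + j) * 2 + b < n * n * 2" using assms(3) by (rule lt_mult_add)
  then show "bidx n w i j b c < dimH n w" unfolding bidx_def dimH_def
    using lt_mult_add assms(4) by blast
qed

lemma dec_props:
  assumes "r < dimH n w"
  shows "r div 2^w div 2 div n < n" "r div 2^w div 2 mod n < n" "r div 2^w mod 2 < 2" "r mod 2^w < 2^w"
    "bidx n w (r div 2^w div 2 div n) (r div 2^w div 2 mod n) (r div 2^w mod 2) (r mod 2^w) = r"
proof -
  have np: "0 < n" using assms unfolding dimH_def by (cases n) auto
  have "r div 2^w < n * n * 2" using assms unfolding dimH_def
    by (simp add: less_mult_imp_div_less)
  then have "r div 2^w div 2 < n * n" by simp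
  then show "r div 2^w div 2 div n < n" by (simp add: less_mult_imp_div_less)
  show "r div 2^w div 2 mod n < n" using np by simp
  show "r div 2^w mod 2 < 2" by simp
  show "r mod 2^w < 2^w" by simp
  show "bidx n w (r div 2^w div 2 div n) (r div 2^w div 2 mod n) (r div 2^w mod 2) (r mod 2^w) = r"
    unfolding bidx_def by (metis div_mult_mod_eq mult.commute)
qed

lemma flip2: "b < 2 \<Longrightarrow> ((b + cmpM \<sigma> i j) mod 2 + cmpM \<sigma> i j) mod 2 = b"
proof -
  assume "b < 2"
  then have "b = 0 \<or> b = 1" by auto
  then show ?thesis by (auto simp: cmpM_def)
qed

lemma piO_bidx:
  assumes "i < n" "j < n" "b < 2" "c < 2^w"
  shows "piO n w \<sigma> (bidx n w i j b c) = bidx n w i j ((b + cmpM \<sigma> i j) mod 2) c"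
  unfolding piO_def bidx_props[OF assms] ..

lemma piO_props:
  assumes "r < dimH n w"
  shows "piO n w \<sigma> r < dimH n w" "piO n w \<sigma> (piO n w \<sigma> r) = r"
proof -
  note d = dec_props[OF assms]
  define i j b c where "i = r div 2^w div 2 div n" and "j = r div 2^w div 2 mod n"
    and "b = r div 2^w mod 2" and "c = r mod 2^w"
  have p: "piO n w \<sigma> r = bidx n w i j ((b + cmpM \<sigma> i j) mod 2) c"
    unfolding piO_def i_def j_def b_def c_def ..
  have bb: "(b + cmpM \<sigma> i j) mod 2 < 2" by simp
  note bp = bidx_props[OF d(1,2)[folded i_def j_def] bb d(4)[folded c_def]]
  show "piO n w \<sigma> r < dimH n w" unfolding p by (rule bp(5))
  have "piO n w \<sigma> (piO n w \<sigma> r) = bidx n w i j (((b + cmpM \<sigma> i j) mod 2 + cmpM \<sigma> i j) mod 2) c"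
    unfolding p using d(1,2)[folded i_def j_def] bb d(4)[folded c_def] by (rule piO_bidx)
  also have "\<dots> = bidx n w i j b c" using d(3) flip2 unfolding b_def by simp
  also have "\<dots> = r" using d(5) unfolding i_def j_def b_def c_def .
  finally show "piO n w \<sigma> (piO n w \<sigma> r) = r" .
qed

lemma Omat_entry:
  assumes "r < dimH n w" "s < dimH n w"
  shows "Omat n w \<sigma> $$ (r,s) = (if s = piO n w \<sigma> r then 1 else 0)"
proof -
  have "(\<exists>i<n. \<exists>j<n. \<exists>b<2. \<exists>c<2 ^ w.
            s = bidx n w i j b c \<and> r = bidx n w i j ((b + cmpM \<sigma> i j) mod 2) c) \<longleftrightarrow> s = piO n w \<sigma> r"
  proof
    assume "\<exists>i<n. \<exists>j<n. \<exists>b<2. \<exists>c<2 ^ w.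
            s = bidx n w i j b c \<and> r = bidx n w i j ((b + cmpM \<sigma> i j) mod 2) c"
    then obtain i j b c where ij: "i < n" "j < n" "b < 2" "c < 2^w" and sr: "s = bidx n w i j b c"
      "r = bidx n w i j ((b + cmpM \<sigma> i j) mod 2) c" by blast
    have bb: "(b + cmpM \<sigma> i j) mod 2 < 2" by simp
    note bp = bidx_props[OF ij(1,2) bb ij(4), folded sr(2)]
    have "piO n w \<sigma> r = bidx n w i j (((b + cmpM \<sigma> i j) mod 2 + cmpM \<sigma> i j) mod 2) c"
      unfolding piO_def bp(1-4) ..
    also have "\<dots> = s" using flip2[OF ij(3)] sr(1) by simp
    finally show "s = piO n w \<sigma> r" by simp
  next
    assume s: "s = piO n w \<sigma> r"
    note d = dec_props[OF assms(1)]
    define i j b c where "i = r div 2^w div 2 div n" and "j = r div 2^w div 2 mod n"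
      and "b = r div 2^w mod 2" and "c = r mod 2^w"
    have bb: "(b + cmpM \<sigma> i j) mod 2 < 2" by simp
    have "s = bidx n w i j ((b + cmpM \<sigma> i j) mod 2) c"
      unfolding s piO_def i_def j_def b_def c_def ..
    moreover have "r = bidx n w i j (((b + cmpM \<sigma> i j) mod 2 + cmpM \<sigma> i j) mod 2) c"
      using d(5) flip2[OF d(3)] unfolding i_def j_def b_def c_def by simp
    ultimately show "\<exists>i<n. \<exists>j<n. \<exists>b<2. \<exists>c<2 ^ w.
            s = bidx n w i j b c \<and> r = bidx n w i j ((b + cmpM \<sigma> i j) mod 2) c"
      using d(1,2,4) bb unfolding i_def j_def c_def by blast
  qed
  then show ?thesis unfolding Omat_def using assms by simp
qed

lemma Omat_carrier: "Omat n w \<sigma> \<in> carrier_mat (dimH n w) (dimH n w)"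
  unfolding Omat_def by simp

lemma Omat_mult:
  assumes "x \<in> carrier_vec (dimH n w)"
  shows "Omat n w \<sigma> *\<^sub>v x = vec (dimH n w) (\<lambda>r. x $ piO n w \<sigma> r)"
proof (rule eq_vecI)
  fix r assume r: "r < dim_vec (vec (dimH n w) (\<lambda>r. x $ piO n w \<sigma> r))"
  then have r': "r < dimH n w" by simp
  have "(Omat n w \<sigma> *\<^sub>v x) $ r = (\<Sum>s\<in>{0..<dimH n w}. Omat n w \<sigma> $$ (r,s) * x $ s)"
    using r' assms Omat_carrier[of n w \<sigma>] by (simp add: scalar_prod_def row_def)
  also have "\<dots> = (\<Sum>s\<in>{0..<dimH n w}. (if s = piO n w \<sigma> r then x $ s else 0))"
    by (rule sum.cong) (auto simp: Omat_entry[OF r'])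
  also have "\<dots> = x $ piO n w \<sigma> r" using piO_props(1)[OF r'] by simp
  finally show "(Omat n w \<sigma> *\<^sub>v x) $ r = vec (dimH n w) (\<lambda>r. x $ piO n w \<sigma> r) $ r" using r' by simp
qed (simp add: Omat_def)

lemma Omat_norm:
  assumes "x \<in> carrier_vec (dimH n w)"
  shows "(Omat n w \<sigma> *\<^sub>v x) \<bullet>c (Omat n w \<sigma> *\<^sub>v x) = x \<bullet>c x"
proof -
  have "(Omat n w \<sigma> *\<^sub>v x) \<bullet>c (Omat n w \<sigma> *\<^sub>v x) = (\<Sum>r\<in>{0..<dimH n w}. x $ piO n w \<sigma> r * cnj (x $ piO n w \<sigma> r))"
    unfolding Omat_mult[OF assms] by (simp add: scalar_prod_def conj_complex)
  also have "\<dots> = (\<Sum>r\<in>{0..<dimH n w}. x $ r * cnj (x $ r))"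
    by (rule sum.reindex_bij_witness[where i = "piO n w \<sigma>" and j = "piO n w \<sigma>"]) (auto simp: piO_props)
  also have "\<dots> = x \<bullet>c x" using assms by (simp add: scalar_prod_def conj_complex)
  finally show ?thesis .
qed

lemma wt_nonneg: "0 \<le> wt n \<sigma> \<tau>"
  unfolding wt_def by simp

lemma wt_neq:
  assumes "n \<ge> 2" "\<sigma> \<in> perms n" "wt n \<sigma> \<tau> \<noteq> 0"
  shows "\<sigma> \<noteq> \<tau>"
proof -
  obtain k d where kd: "valid_kd n k d" "\<tau> = cyc k d \<circ> \<sigma>"
    using assms(3) unfolding wt_def by (auto split: if_splits)
  have kn: "k < n" "1 \<le> d" using kd(1) assms(1) unfolding valid_kd_def by auto
  have p: "\<sigma> permutes {..<n}" using assms(2) unfolding perms_def by simp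
  obtain x where x: "\<sigma> x = k" using permutes_surj[OF p] by (metis surjD)
  have "\<tau> x = k + d" using kd(2) x unfolding cyc_def by simp
  then have "\<tau> x \<noteq> \<sigma> x" using x kn by simp
  then show ?thesis by auto
qed

lemma psi_props:
  assumes U: "\<forall>t\<le>T. unitary_mat (dimH n w) (U t)" and n: "n \<ge> 2" and t: "t \<le> T"
  shows "psi n w U \<sigma> t \<in> carrier_vec (dimH n w) \<and> psi n w U \<sigma> t \<bullet>c psi n w U \<sigma> t = 1"
  using t
proof (induction t)
  case 0
  have u: "unitary_mat (dimH n w) (U 0)" using U by simp
  then have Uc: "U 0 \<in> carrier_mat (dimH n w) (dimH n w)" unfolding unitary_mat_def by simp
  have N: "0 < dimH n w" using n unfolding dimH_def by simp
  have b0: "bidx n w 0 0 0 0 = 0" unfolding bidx_def by simp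
  have "psi n w U \<sigma> 0 \<bullet>c psi n w U \<sigma> 0 = unit_vec (dimH n w) 0 \<bullet>c unit_vec (dimH n w) 0"
    unfolding psi.simps b0 by (rule unitary_norm[OF u unit_vec_carrier])
  also have "\<dots> = 1" using N by (simp add: conj_complex)
  finally show ?case using Uc by simp
next
  case (Suc t)
  then have IH: "psi n w U \<sigma> t \<in> carrier_vec (dimH n w)" "psi n w U \<sigma> t \<bullet>c psi n w U \<sigma> t = 1" by auto
  have u: "unitary_mat (dimH n w) (U (Suc t))" using U Suc.prems by simp
  then have Uc: "U (Suc t) \<in> carrier_mat (dimH n w) (dimH n w)" unfolding unitary_mat_def by simp
  have Oc: "Omat n w \<sigma> *\<^sub>v psi n w U \<sigma> t \<in> carrier_vec (dimH n w)"
    using Omat_carrier IH(1) by (rule mult_mat_vec_carrier)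
  have "psi n w U \<sigma> (Suc t) \<bullet>c psi n w U \<sigma> (Suc t) = (Omat n w \<sigma> *\<^sub>v psi n w U \<sigma> t) \<bullet>c (Omat n w \<sigma> *\<^sub>v psi n w U \<sigma> t)"
    unfolding psi.simps by (rule unitary_norm[OF u Oc])
  also have "\<dots> = 1" using Omat_norm[OF IH(1)] IH(2) by simp
  finally show ?case using Uc Oc by simp
qed

theorem lemma2:
  fixes n w T :: nat and \<epsilon> :: real
    and U :: "nat \<Rightarrow> complex mat"
    and E :: "(nat \<Rightarrow> nat) \<Rightarrow> complex mat"
  assumes "n \<ge> 2" and "0 \<le> \<epsilon>" and "\<epsilon> < 1 / 2"
    and "\<forall>t\<le>T. unitary_mat (dimH n w) (U t)"
    and "\<forall>\<sigma>\<in>perms n. psd_mat (dimH n w) (E \<sigma>)"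
    and "\<forall>r<dimH n w. \<forall>c<dimH n w. (\<Sum>\<sigma>\<in>perms n. E \<sigma> $$ (r, c)) = 1\<^sub>m (dimH n w) $$ (r, c)"
    and "\<forall>\<sigma>\<in>perms n. Re ((E \<sigma> *\<^sub>v psi n w U \<sigma> T) \<bullet>c psi n w U \<sigma> T) \<ge> 1 - \<epsilon>"
  shows "s_prog n w U T \<le> 2 * sqrt (\<epsilon> * (1 - \<epsilon>)) * s_prog n w U 0"
proof -
  define B where "B = 2 * sqrt (\<epsilon> * (1 - \<epsilon>))"
  have fin: "finite (perms n)" unfolding perms_def by (rule finite_permutations) simp
  have pT: "\<And>\<sigma>. psi n w U \<sigma> T \<in> carrier_vec (dimH n w) \<and> psi n w U \<sigma> T \<bullet>c psi n w U \<sigma> T = 1"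
    using psi_props[OF assms(4) assms(1) order_refl] by blast
  have p0: "\<And>\<sigma>. psi n w U \<sigma> 0 \<in> carrier_vec (dimH n w) \<and> psi n w U \<sigma> 0 \<bullet>c psi n w U \<sigma> 0 = 1"
    using psi_props[OF assms(4) assms(1) le0] by blast
  have tm: "wt n \<sigma> \<tau> * cmod (psi n w U \<sigma> T \<bullet>c psi n w U \<tau> T) \<le> B * (wt n \<sigma> \<tau> * cmod (psi n w U \<sigma> 0 \<bullet>c psi n w U \<tau> 0))"
    if s: "\<sigma> \<in> perms n" and t: "\<tau> \<in> perms n" for \<sigma> \<tau>
  proof (cases "wt n \<sigma> \<tau> = 0")
    case True then show ?thesis by simp
  next
    case False
    then have st: "\<sigma> \<noteq> \<tau>" using wt_neq[OF assms(1) s] by blast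
    have c: "cmod (psi n w U \<sigma> T \<bullet>c psi n w U \<tau> T) \<le> B"
      unfolding B_def
      by (rule pair_bound[OF fin s t st assms(5) assms(6)])
        (use pT assms(7) s t assms(2,3) in auto)
    have "psi n w U \<tau> 0 = psi n w U \<sigma> 0" by simp
    then have "cmod (psi n w U \<sigma> 0 \<bullet>c psi n w U \<tau> 0) = 1" using p0[of \<sigma>] by simp
    moreover have "wt n \<sigma> \<tau> * cmod (psi n w U \<sigma> T \<bullet>c psi n w U \<tau> T) \<le> wt n \<sigma> \<tau> * B"
      using c wt_nonneg[of n \<sigma> \<tau>] by (rule mult_left_mono)
    ultimately show ?thesis by (simp add: mult.commute)
  qed
  have "s_prog n w U T \<le> (\<Sum>\<sigma>\<in>perms n. \<Sum>\<tau>\<in>perms n. B * (wt n \<sigma> \<tau> * cmod (psi n w U \<sigma> 0 \<bullet>c psi n w U \<tau> 0)))"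
    unfolding s_prog_def by (intro sum_mono tm)
  also have "\<dots> = B * s_prog n w U 0"
    unfolding s_prog_def by (simp add: sum_distrib_left)
  finally show ?thesis unfolding B_def .
qed

end
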